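(* Fix $t\in(0,1)$ and let $A\in\{0,1\}^{n\times n}$. Suppose $\widehat{Y}$ is the unique optimal solution of the convex program $$\max_{Y\in\mathbb{R}^{n\times n}}\ c_{A}\sum_{(i,j):a_{ij}=1}y_{ij}-c_{A^c}\sum_{(i,j):a_{ij}=0}y_{ij}-48\sqrt{n}\,\|Y\|_*\quad\text{s.t. } 0\le y_{ij}\le 1\ \ \forall i,j,$$ with input $A$, where $c_{A}=\sqrt{(1-t)/t}$ and $c_{A^c}=\sqrt{t/(1-t)}$. Let $\widetilde{A}\in\{0,1\}^{n\times n}$ be obtained from $A$ by (a) choosing some pairs $(i,j)$ with $\widehat{y}_{ij}=1$ and $a_{ij}=0$ and setting $\widetilde{a}_{ij}=1$, and (b) choosing some pairs $(i,j)$ with $\widehat{y}_{ij}=0$ and $a_{ij}=1$ and setting $\widetilde{a}_{ij}=0$ (all other entries unchanged). Then $\widehat{Y}$ is also the unique optimal solution of the same program with $\widetilde{A}$ as input.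
   Context: $\|Y\|_*$ denotes the nuclear norm (sum of singular values). The sums run over ordered pairs $(i,j)\in\{1,\dots,n\}^2$, including diagonal pairs. The paper states this lemma in the setting of the stochastic blockmodel with in-cluster edge density $p$ larger than cross-cluster density $q$ ($p>q$), although the program itself depends only on $A$ and $t$. *)

theory Defs
  imports "HOL-Analysis.Analysis"
begin

definition diag_mat :: "('n::finite \<Rightarrow> real) \<Rightarrow> real^'n^'n" where
  "diag_mat s = (\<chi> i j. if i = j then s i else 0)"

text \<open>Nuclear norm: sum of singular values, taken from a singular value
  decomposition Y = U diag(s) V^T with U, V orthogonal and s nonnegative
  (the multiset of singular values, hence their sum, is unique).\<close>
definition nuclear_norm :: "real^'n::finite^'n \<Rightarrow> real" where
  "nuclear_norm Y = (THE x. \<exists>U V s. orthogonal_matrix U \<and> orthogonal_matrix V \<and>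
       (\<forall>i. 0 \<le> s i) \<and> Y = U ** diag_mat s ** transpose V \<and> x = (\<Sum>i\<in>UNIV. s i))"

definition feasible :: "real^'n::finite^'n \<Rightarrow> bool" where
  "feasible Y \<longleftrightarrow> (\<forall>i j. 0 \<le> Y$i$j \<and> Y$i$j \<le> 1)"

definition binary_mat :: "real^'n::finite^'n \<Rightarrow> bool" where
  "binary_mat A \<longleftrightarrow> (\<forall>i j. A$i$j = 0 \<or> A$i$j = 1)"

definition objective :: "real \<Rightarrow> real^'n::finite^'n \<Rightarrow> real^'n^'n \<Rightarrow> real" where
  "objective t A Y =
     sqrt ((1 - t) / t) * (\<Sum>(i,j)\<in>{(i,j). A$i$j = 1}. Y$i$j)
   - sqrt (t / (1 - t)) * (\<Sum>(i,j)\<in>{(i,j). A$i$j = 0}. Y$i$j)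
   - 48 * sqrt (real CARD('n)) * nuclear_norm Y"

definition unique_optimal :: "real \<Rightarrow> real^'n::finite^'n \<Rightarrow> real^'n^'n \<Rightarrow> bool" where
  "unique_optimal t A Y \<longleftrightarrow> feasible Y \<and>
     (\<forall>Y'. feasible Y' \<and> Y' \<noteq> Y \<longrightarrow> objective t A Y' < objective t A Y)"

end

theory Submission
  imports Defs
begin

definition wt :: "real \<Rightarrow> real^'n::finite^'n \<Rightarrow> 'n \<times> 'n \<Rightarrow> real" where
  "wt t A p = (if A$fst p$snd p = 1 then sqrt ((1 - t) / t)
     else if A$fst p$snd p = 0 then - sqrt (t / (1 - t)) else 0)"

lemma sum_cases:
  fixes A Y :: "real^'n::finite^'n"
  shows "(\<Sum>(i,j)\<in>{(i,j). A$i$j = c}. Y$i$j) = (\<Sum>p\<in>UNIV. if A$fst p$snd p = c then Y$fst p$snd p else 0)"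
proof -
  have "{(i,j). A$i$j = c} = {p\<in>UNIV. A$fst p$snd p = c}" by auto
  then show ?thesis
    by (simp add: sum.inter_filter[symmetric] case_prod_beta)
qed

lemma obj_lin:
  fixes A Y :: "real^'n::finite^'n"
  shows "objective t A Y = (\<Sum>p\<in>UNIV. wt t A p * Y$fst p$snd p)
     - 48 * sqrt (real CARD('n)) * nuclear_norm Y"
proof -
  have "(\<Sum>p\<in>UNIV. wt t A p * Y$fst p$snd p) =
    sqrt ((1 - t) / t) * (\<Sum>p\<in>UNIV. if A$fst p$snd p = 1 then Y$fst p$snd p else 0)
    - sqrt (t / (1 - t)) * (\<Sum>p\<in>UNIV. if A$fst p$snd p = 0 then Y$fst p$snd p else 0)"
    unfolding sum_distrib_left sum_subtractf[symmetric]
    by (rule sum.cong) (auto simp: wt_def)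
  then show ?thesis unfolding objective_def sum_cases by simp
qed

theorem lemma1:
  fixes t :: real and A At Yh :: "real^'n::finite^'n"
  assumes "0 < t" and "t < 1"
    and "binary_mat A" and "binary_mat At"
    and "unique_optimal t A Yh"
    and "\<forall>i j. At$i$j \<noteq> A$i$j \<longrightarrow>
            (Yh$i$j = 1 \<and> A$i$j = 0 \<and> At$i$j = 1) \<or>
            (Yh$i$j = 0 \<and> A$i$j = 1 \<and> At$i$j = 0)"
  shows "unique_optimal t At Yh"
proof -
  have fe: "feasible Yh" using assms(5) unfolding unique_optimal_def by blast
  define D where "D Y = (\<Sum>p\<in>UNIV. (wt t At p - wt t A p) * Y$fst p$snd p)" for Y :: "real^'n^'n"
  have ob: "objective t At Y = objective t A Y + D Y" for Y
    unfolding obj_lin D_def by (simp add: algebra_simps sum.distrib sum_subtractf)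
  have DD: "D Y \<le> D Yh" if "feasible Y" for Y
  proof -
    have "(wt t At p - wt t A p) * Y$fst p$snd p \<le> (wt t At p - wt t A p) * Yh$fst p$snd p" for p
    proof (cases "At$fst p$snd p = A$fst p$snd p")
      case True then show ?thesis by (simp add: wt_def)
    next
      case False
      have s: "0 \<le> sqrt ((1 - t) / t) + sqrt (t / (1 - t))"
        using assms(1,2) by (intro add_nonneg_nonneg) simp_all
      have y: "0 \<le> Y$fst p$snd p" "Y$fst p$snd p \<le> 1" using that unfolding feasible_def by auto
      from False assms(6) have "(Yh$fst p$snd p = 1 \<and> A$fst p$snd p = 0 \<and> At$fst p$snd p = 1) \<or>
            (Yh$fst p$snd p = 0 \<and> A$fst p$snd p = 1 \<and> At$fst p$snd p = 0)" by blast
      then show ?thesis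
      proof
        assume h: "Yh$fst p$snd p = 1 \<and> A$fst p$snd p = 0 \<and> At$fst p$snd p = 1"
        then show ?thesis using s y by (simp add: wt_def mult_left_le)
      next
        assume h: "Yh$fst p$snd p = 0 \<and> A$fst p$snd p = 1 \<and> At$fst p$snd p = 0"
        have "0 \<le> (sqrt (t / (1 - t)) + sqrt ((1 - t) / t)) * Y$fst p$snd p"
          using s y by simp
        then show ?thesis using h by (simp add: wt_def algebra_simps)
      qed
    qed
    then show ?thesis unfolding D_def by (intro sum_mono) auto
  qed
  show ?thesis unfolding unique_optimal_def
  proof (intro conjI allI impI)
    show "feasible Yh" by (rule fe)
    fix Y' assume h: "feasible Y' \<and> Y' \<noteq> Yh"
    then have "objective t A Y' < objective t A Yh" using assms(5) unfolding unique_optimal_def by blast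
    then show "objective t At Y' < objective t At Yh" using DD[of Y'] h by (simp add: ob)
  qed
qed

end
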